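(* Consider the parallel multiple access channel power allocation game with $K$ users and $A$ nodes, as described in the context, with random channel gains. If $p\in\Delta$ is a Nash equilibrium, then almost surely $p$ lies in the relative interior of a face of the polytope $\Delta$ of dimension at most $A-1$.
   Context: Setting: users $\mathcal{K}=\{1,\dots,K\}$, nodes $\mathcal{A}=\{1,\dots,A\}$. User $k$ has maximum power $P_k>0$ and strategy set $\Delta_k=\{p_k\in\mathbb{R}^{\mathcal{A}}: p_{k\alpha}\ge 0,\ \sum_\alpha p_{k\alpha}=P_k\}$ (a scaled simplex); $\Delta=\prod_k\Delta_k\subset\mathbb{R}^{KA}$. Payoffs: $u_k(p)=\sum_{\alpha} b_\alpha\log\bigl(1+\frac{g_{k\alpha}p_{k\alpha}}{\sigma_\alpha^2+\sum_{\ell\neq k}g_{\ell\alpha}p_{\ell\alpha}}\bigr)$ with constants $b_\alpha>0$, $\sigma_\alpha^2>0$ and random channel gains $g_{k\alpha}>0$ drawn from a continuous (nonatomic) probability distribution on the positive reals; "almost surely" refers to their law. $q\in\Delta$ is a Nash equilibrium if $u_k(q)\ge u_k(q_{-k};q_k')$ for all $k$ and all $q_k'\in\Delta_k$. *)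

theory Defs
  imports "HOL-Probability.Probability"
begin

text \<open>Users are indexed by a finite type 'k, nodes by a finite type 'a.
  A power profile is a vector p in real^('k * 'a), with p $ (k, alpha) the power of user k on node alpha.\<close>

definition strategy_set :: "('k::finite \<Rightarrow> real) \<Rightarrow> 'k \<Rightarrow> ('a::finite \<Rightarrow> real) set" where
  "strategy_set P k = {q. (\<forall>\<alpha>. q \<alpha> \<ge> 0) \<and> (\<Sum>\<alpha>\<in>UNIV. q \<alpha>) = P k}"

definition profiles :: "('k::finite \<Rightarrow> real) \<Rightarrow> (real, 'k \<times> 'a::finite) vec set" where
  "profiles P = {p. (\<forall>k \<alpha>. p $ (k, \<alpha>) \<ge> 0) \<and> (\<forall>k. (\<Sum>\<alpha>\<in>UNIV. p $ (k, \<alpha>)) = P k)}"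

definition payoff ::
  "('a::finite \<Rightarrow> real) \<Rightarrow> ('a \<Rightarrow> real) \<Rightarrow> ('k::finite \<times> 'a \<Rightarrow> real) \<Rightarrow> 'k \<Rightarrow> (real, 'k \<times> 'a) vec \<Rightarrow> real" where
  "payoff b \<sigma>2 g k p =
     (\<Sum>\<alpha>\<in>UNIV. b \<alpha> * ln (1 + g (k, \<alpha>) * p $ (k, \<alpha>) /
        (\<sigma>2 \<alpha> + (\<Sum>l\<in>UNIV - {k}. g (l, \<alpha>) * p $ (l, \<alpha>)))))"

definition deviate :: "(real, 'k::finite \<times> 'a::finite) vec \<Rightarrow> 'k \<Rightarrow> ('a \<Rightarrow> real) \<Rightarrow> (real, 'k \<times> 'a) vec" where
  "deviate p k q = (\<chi> i. if fst i = k then q (snd i) else p $ i)"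

definition nash_equilibrium ::
  "('k::finite \<Rightarrow> real) \<Rightarrow> ('a::finite \<Rightarrow> real) \<Rightarrow> ('a \<Rightarrow> real) \<Rightarrow> ('k \<times> 'a \<Rightarrow> real) \<Rightarrow> (real, 'k \<times> 'a) vec \<Rightarrow> bool" where
  "nash_equilibrium P b \<sigma>2 g q \<longleftrightarrow> q \<in> profiles P \<and>
     (\<forall>k. \<forall>q' \<in> strategy_set P k. payoff b \<sigma>2 g k q \<ge> payoff b \<sigma>2 g k (deviate q k q'))"

end

theory Submission
  imports Defs
begin


lemma convex_profiles: "convex (profiles P)"
  unfolding convex_def profiles_def
  by (auto simp: sum.distrib sum_distrib_left[symmetric] distrib_right[symmetric])

lemma row_pos:
  assumes "p \<in> profiles P" "P k > 0"
  shows "\<exists>\<alpha>. p $ (k, \<alpha>) > 0"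
proof (rule ccontr)
  assume "\<not> ?thesis"
  then have "\<forall>\<alpha>. p $ (k,\<alpha>) = 0" using assms(1) unfolding profiles_def by (auto simp: not_less order.antisym)
  then have "(\<Sum>\<alpha>\<in>UNIV. p $ (k, \<alpha>)) = 0" by simp
  then show False using assms unfolding profiles_def by auto
qed

lemma face_lemma:
  fixes p :: "(real, 'k::finite \<times> 'a::finite) vec"
  assumes pP: "p \<in> profiles P" and Ppos: "\<And>k. P k > 0"
  shows "\<exists>F. F face_of profiles P \<and> p \<in> rel_interior F \<and>
            aff_dim F \<le> int (card {i. p$i > 0}) - int CARD('k)"
proof -
  have pnn: "\<And>i. p$i \<ge> 0" using pP unfolding profiles_def by auto
  define F where "F = {q \<in> profiles P. \<forall>i. p$i = 0 \<longrightarrow> q$i = 0}"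
  define a :: "(real, 'k \<times> 'a) vec" where "a = (\<chi> i. if p$i = 0 then -1 else 0)"
  have Feq: "F = profiles P \<inter> {x. a \<bullet> x = 0}"
  proof -
    have "a \<bullet> q = 0 \<longleftrightarrow> (\<forall>i. p$i = 0 \<longrightarrow> q$i = 0)" if "q \<in> profiles P" for q
    proof -
      have qnn: "\<And>i. q$i \<ge> 0" using that unfolding profiles_def by auto
      have "a \<bullet> q = (\<Sum>i\<in>UNIV. - (if p$i = 0 then q$i else 0))"
        unfolding inner_vec_def a_def by (rule sum.cong) auto
      then have "a \<bullet> q = - (\<Sum>i\<in>UNIV. if p$i = 0 then q$i else 0)" by (simp add: sum_negf)
      moreover have "(\<Sum>i\<in>UNIV. if p$i = 0 then q$i else 0) = 0 \<longleftrightarrow> (\<forall>i. (if p$i = 0 then q$i else 0) = 0)"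
        by (subst sum_nonneg_eq_0_iff) (auto simp: qnn)
      ultimately show ?thesis by (auto split: if_splits)
    qed
    then show ?thesis unfolding F_def by auto
  qed
  have face: "F face_of profiles P"
  proof -
    have "a \<bullet> x \<le> 0" if "x \<in> profiles P" for x
    proof -
      have "a \<bullet> x = (\<Sum>i\<in>UNIV. a$i * x$i)" by (simp add: inner_vec_def)
      also have "\<dots> \<le> 0" using that unfolding profiles_def a_def
        by (intro sum_nonpos) auto
      finally show ?thesis .
    qed
    then show ?thesis unfolding Feq by (intro face_of_Int_supporting_hyperplane_le convex_profiles)
  qed
  have pF: "p \<in> F" using pP unfolding F_def by auto
  define L where "L = {q::(real, 'k \<times> 'a) vec. (\<forall>k. (\<Sum>\<alpha>\<in>UNIV. q $ (k, \<alpha>)) = P k) \<and> (\<forall>i. p$i = 0 \<longrightarrow> q$i = 0)}"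
  have affL: "affine L"
    unfolding affine_def L_def
    by (auto simp: sum.distrib sum_distrib_left[symmetric] distrib_right[symmetric])
  have FL: "F \<subseteq> L" unfolding F_def L_def profiles_def by auto
  have hullL: "affine hull F \<subseteq> L" using FL affL by (rule hull_minimal)
  define Pos where "Pos = {i. p$i > 0}"
  obtain k0 :: 'k where True by simp
  obtain \<alpha>0 where "p $ (k0, \<alpha>0) > 0" using row_pos[OF pP Ppos] by blast
  then have Posne: "Pos \<noteq> {}" unfolding Pos_def by auto
  define e where "e = Min ((\<lambda>i. p$i) ` Pos)"
  have epos: "e > 0" unfolding e_def using Posne by (simp add: Min_gr_iff Pos_def)
  have ele: "e \<le> p$i" if "p$i > 0" for i unfolding e_def using that by (intro Min_le) (auto simp: Pos_def)
  have relint: "p \<in> rel_interior F"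
    unfolding mem_rel_interior_ball
  proof (intro conjI exI[of _ e] pF epos subsetI)
    fix q assume q: "q \<in> ball p e \<inter> affine hull F"
    then have qL: "q \<in> L" using hullL by auto
    have "q$i \<ge> 0" for i
    proof (cases "p$i = 0")
      case True then show ?thesis using qL unfolding L_def mem_Collect_eq by (metis order_refl)
    next
      case False
      then have "p$i > 0" using pnn[of i] by auto
      have "\<bar>(q - p)$i\<bar> \<le> norm (q - p)" by (rule component_le_norm_cart)
      also have "\<dots> < e" using q by (simp add: dist_norm norm_minus_commute)
      finally show ?thesis using ele[OF \<open>p$i > 0\<close>] by auto
    qed
    then show "q \<in> F" using qL unfolding F_def L_def profiles_def by auto
  qed
  define ak where "ak k = (SOME \<alpha>. p $ (k, \<alpha>) > 0)" for k
  have ak: "p $ (k, ak k) > 0" for k unfolding ak_def by (rule someI_ex) (rule row_pos[OF pP Ppos])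
  define I where "I = {i. p$i > 0 \<and> snd i \<noteq> ak (fst i)}"
  define J where "J = range (\<lambda>k. (k, ak k))"
  have PosIJ: "Pos = I \<union> J" "I \<inter> J = {}" unfolding Pos_def I_def J_def using ak by auto
  have cardJ: "card J = CARD('k)" unfolding J_def by (subst card_image) (auto intro: inj_onI)
  have cardPos: "card Pos = card I + CARD('k)" using PosIJ cardJ by (simp add: card_Un_disjoint)
  define T where "T = (+) (- p) ` F"
  define V where "V = {v::(real, 'k \<times> 'a) vec. (\<forall>k. (\<Sum>\<alpha>\<in>UNIV. v $ (k, \<alpha>)) = 0) \<and> (\<forall>i. p$i = 0 \<longrightarrow> v$i = 0)}"
  have subV: "subspace V" unfolding subspace_def V_def
    by (auto simp: sum.distrib sum_distrib_left[symmetric])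
  have TV: "T \<subseteq> V" using pP unfolding T_def V_def F_def profiles_def by (auto simp: sum_subtractf)
  have spanTV: "span T \<subseteq> V" by (rule span_minimal[OF TV subV])
  define f :: "(real, 'k \<times> 'a) vec \<Rightarrow> (real, 'k \<times> 'a) vec" where "f v = (\<chi> i. if i \<in> I then v$i else 0)" for v
  have linf: "linear f" unfolding f_def by (intro linearI) (auto simp: vec_eq_iff)
  have injV: "inj_on f V"
  proof (rule inj_onI)
    fix v w assume v: "v \<in> V" and w: "w \<in> V" and fvw: "f v = f w"
    define u where "u = v - w"
    have uV: "u \<in> V" unfolding u_def by (rule subspace_diff[OF subV v w])
    have uI: "u$i = 0" if "i \<in> I" for i
    proof -
      have "(f v)$i = (f w)$i" using fvw by simp
      then show ?thesis using that by (simp add: f_def u_def)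
    qed
    have uZ: "u$i = 0" if "p$i = 0" for i using uV that unfolding V_def by (cases i) auto
    have u0: "u $ (k, \<alpha>) = 0" if "\<alpha> \<noteq> ak k" for k \<alpha>
    proof (cases "p $ (k,\<alpha>) = 0")
      case True then show ?thesis by (rule uZ)
    next
      case False then have "(k,\<alpha>) \<in> I" using pnn[of "(k,\<alpha>)"] that unfolding I_def by auto
      then show ?thesis by (rule uI)
    qed
    have "u $ i = 0" for i
    proof -
      obtain k \<alpha> where i: "i = (k,\<alpha>)" by fastforce
      show ?thesis
      proof (cases "\<alpha> = ak k")
        case True
        have "(\<Sum>\<beta>\<in>UNIV. u $ (k, \<beta>)) = (\<Sum>\<beta>\<in>UNIV. if \<beta> = ak k then u $ (k, ak k) else 0)"
          by (rule sum.cong) (auto simp: u0)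
        also have "\<dots> = u $ (k, ak k)" by simp
        finally show ?thesis using uV True i unfolding V_def by auto
      next
        case False then show ?thesis using u0 i by auto
      qed
    qed
    then show "v = w" unfolding u_def by (simp add: vec_eq_iff)
  qed
  have injT: "inj_on f (span T)" using injV spanTV by (rule inj_on_subset)
  have "dim T = dim (f ` T)" using dim_image_eq[OF linf injT] by simp
  also have "\<dots> \<le> dim {x::(real, 'k \<times> 'a) vec. \<forall>i. i \<notin> I \<longrightarrow> x$i = 0}"
    by (rule dim_subset) (auto simp: f_def)
  also have "\<dots> = card I" by (simp only: dim_vec_eq[symmetric] dim_substandard_cart)
  finally have dimT: "dim T \<le> card I" .
  have "aff_dim F = int (dim T)" unfolding T_def by (rule aff_dim_eq_dim) (rule hull_inc[OF pF])
  then have "aff_dim F \<le> int (card Pos) - int CARD('k)" using dimT cardPos by simp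
  then show ?thesis using face relint unfolding Pos_def by blast
qed




lemma lin_alg:
  fixes E :: "('k::finite \<times> 'a::finite) set"
  assumes cE: "card E \<ge> CARD('a) + CARD('k)"
  shows "\<exists>h::(real, 'k \<times> 'a) vec. h \<noteq> 0 \<and>
     (\<forall>c. (\<exists>x y. \<forall>i\<in>E. c$i = x (snd i) + y (fst i)) \<longrightarrow> h \<bullet> c = 0)"
proof -
  obtain k0 :: 'k where True by simp
  define \<xi> :: "'a \<Rightarrow> (real, 'k \<times> 'a) vec" where "\<xi> \<alpha> = (\<chi> i. if snd i = \<alpha> then 1 else 0)" for \<alpha>
  define \<eta> :: "'k \<Rightarrow> (real, 'k \<times> 'a) vec" where "\<eta> k = (\<chi> i. if fst i = k then 1 else 0)" for k
  define S where "S = range \<xi> \<union> \<eta> ` (UNIV - {k0}) \<union> (\<lambda>i. axis i 1) ` (UNIV - E)"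
  have finS: "finite S" unfolding S_def by auto
  have "card S \<le> card (range \<xi>) + card (\<eta> ` (UNIV - {k0})) + card ((\<lambda>i. axis i (1::real)) ` (UNIV - E))"
    unfolding S_def by (meson card_Un_le add_le_mono order_trans order_refl)
  also have "\<dots> \<le> CARD('a) + (CARD('k) - 1) + (CARD('k \<times> 'a) - card E)"
  proof (intro add_le_mono)
    show "card (range \<xi>) \<le> CARD('a)" by (rule card_image_le) simp
    show "card (\<eta> ` (UNIV - {k0})) \<le> CARD('k) - 1"
      using card_image_le[of "UNIV - {k0}" \<eta>] by (simp add: card_Diff_subset)
    show "card ((\<lambda>i. axis i (1::real)) ` (UNIV - E)) \<le> CARD('k \<times> 'a) - card E"
      using card_image_le[of "UNIV - E" "\<lambda>i. axis i (1::real)"] by (simp add: card_Diff_subset)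
  qed
  also have "\<dots> < CARD('k \<times> 'a)"
  proof -
    have "card E \<le> CARD('k \<times> 'a)" by (rule card_mono) auto
    moreover have "CARD('k) \<ge> 1" by (simp add: Suc_le_eq)
    ultimately show ?thesis using cE by linarith
  qed
  finally have "dim S < DIM((real, 'k \<times> 'a) vec)"
    using dim_le_card[OF span_superset finS] by simp
  then obtain h :: "(real, 'k \<times> 'a) vec" where h0: "h \<noteq> 0" and horth: "\<And>y. y \<in> span S \<Longrightarrow> orthogonal h y"
    by (rule orthogonal_to_subspace_exists) blast
  have "h \<bullet> c = 0" if "\<forall>i\<in>E. c$i = x (snd i) + y (fst i)" for c x y
  proof -
    define r where "r i = c$i - (x (snd i) + y (fst i))" for i
    have ceq: "c = (\<Sum>\<alpha>\<in>UNIV. (x \<alpha> + y k0) *\<^sub>R \<xi> \<alpha>) + (\<Sum>k\<in>UNIV - {k0}. (y k - y k0) *\<^sub>R \<eta> k)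
                 + (\<Sum>i\<in>UNIV - E. r i *\<^sub>R axis i 1)"
    proof (subst vec_eq_iff, intro allI)
      fix j :: "'k \<times> 'a"
      obtain k \<beta> where j: "j = (k, \<beta>)" by fastforce
      have 1: "(\<Sum>\<alpha>\<in>UNIV. (x \<alpha> + y k0) *\<^sub>R \<xi> \<alpha>) $ j = x \<beta> + y k0"
        by (simp add: j \<xi>_def if_distrib cong: if_cong)
      have 2: "(\<Sum>k'\<in>UNIV - {k0}. (y k' - y k0) *\<^sub>R \<eta> k') $ j = (if k = k0 then 0 else y k - y k0)"
        by (simp add: j \<eta>_def if_distrib cong: if_cong)
      have 3: "(\<Sum>i\<in>UNIV - E. r i *\<^sub>R axis i (1::real)) $ j = (if j \<in> E then 0 else r j)"
        by (simp add: axis_def if_distrib cong: if_cong)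
      show "c $ j = ((\<Sum>\<alpha>\<in>UNIV. (x \<alpha> + y k0) *\<^sub>R \<xi> \<alpha>) + (\<Sum>k\<in>UNIV - {k0}. (y k - y k0) *\<^sub>R \<eta> k)
                 + (\<Sum>i\<in>UNIV - E. r i *\<^sub>R axis i 1)) $ j"
        unfolding vector_add_component 1 2 3 using that j by (auto simp: r_def)
    qed
    have "c \<in> span S" unfolding ceq
      by (intro span_add span_sum span_scale span_base) (auto simp: S_def)
    then show ?thesis using horth orthogonal_def by blast
  qed
  then show ?thesis using h0 by blast
qed




lemma null_hyper:
  fixes h :: "(real, 'k::finite \<times> 'a::finite) vec" and \<beta> :: "'k \<times> 'a \<Rightarrow> real"
    and \<mu> :: "real measure"
  assumes prob: "prob_space \<mu>" and borel: "sets \<mu> = sets borel"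
    and nonatomic: "\<And>x. emeasure \<mu> {x} = 0" and h0: "h \<noteq> 0"
  shows "AE g in PiM UNIV (\<lambda>_::'k \<times> 'a. \<mu>).
           \<not> ((\<forall>i. g i > 0) \<and> (\<Sum>i\<in>UNIV. h$i * (\<beta> i + ln (g i))) = 0)"
proof -
  obtain i0 where hi0: "h$i0 \<noteq> 0" using h0 by (auto simp: vec_eq_iff)
  define M where "M = PiM UNIV (\<lambda>_::'k \<times> 'a. \<mu>)"
  define Q where "Q g \<longleftrightarrow> (\<forall>i. g i > 0) \<and> (\<Sum>i\<in>UNIV. h$i * (\<beta> i + ln (g i))) = 0" for g :: "'k \<times> 'a \<Rightarrow> real"
  define N where "N = {g \<in> space M. Q g}"
  have comp[measurable]: "(\<lambda>g. g i) \<in> borel_measurable M" for i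
    unfolding M_def
    by (subst measurable_cong_sets[OF refl borel[symmetric]]) (rule measurable_component_singleton, simp)
  have "Measurable.pred M Q" unfolding Q_def by measurable
  then have Nmeas: "N \<in> sets M" unfolding N_def pred_def .
  interpret product_sigma_finite "\<lambda>_::'k \<times> 'a. \<mu>"
    unfolding product_sigma_finite_def using prob by (simp add: prob_space_imp_subprob_space subprob_space_imp_sigma_finite)
  define I where "I = (UNIV::('k \<times> 'a) set) - {i0}"
  have MI: "M = PiM (insert i0 I) (\<lambda>_. \<mu>)" unfolding M_def I_def by simp
  define R where "R x = (\<Sum>i\<in>I. h$i * (\<beta> i + ln (x i)))" for x :: "'k \<times> 'a \<Rightarrow> real"
  define t where "t x = exp (- R x / h$i0 - \<beta> i0)" for x
  have pt: "indicator N (x(i0 := y)) \<le> (indicator {t x} y :: ennreal)" for x y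
  proof (cases "x(i0 := y) \<in> N")
    case True
    then have Q: "Q (x(i0 := y))" unfolding N_def by auto
    then have ypos: "y > 0" unfolding Q_def by (metis fun_upd_same)
    have "(\<Sum>i\<in>UNIV. h$i * (\<beta> i + ln ((x(i0 := y)) i))) = h$i0 * (\<beta> i0 + ln y) + R x"
      unfolding R_def I_def
      by (subst sum.remove[of _ i0]) (auto intro!: sum.cong)
    then have "h$i0 * (\<beta> i0 + ln y) + R x = 0" using Q unfolding Q_def by simp
    then have "ln y = - R x / h$i0 - \<beta> i0" using hi0 by (simp add: field_simps)
    then have "y = t x" unfolding t_def using ypos by (metis exp_ln)
    then show ?thesis using True by simp
  qed simp
  have "emeasure M N = (\<integral>\<^sup>+ g. indicator N g \<partial>M)" using Nmeas by simp
  also have "\<dots> = (\<integral>\<^sup>+ x. (\<integral>\<^sup>+ y. indicator N (x(i0 := y)) \<partial>\<mu>) \<partial>(PiM I (\<lambda>_. \<mu>)))"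
    unfolding MI
    by (rule product_nn_integral_insert) (auto simp: I_def intro!: borel_measurable_indicator Nmeas[unfolded M_def])
  also have "\<dots> \<le> (\<integral>\<^sup>+ x. 0 \<partial>(PiM I (\<lambda>_. \<mu>)))"
  proof (rule nn_integral_mono)
    fix x
    have "(\<integral>\<^sup>+ y. indicator N (x(i0 := y)) \<partial>\<mu>) \<le> (\<integral>\<^sup>+ y. indicator {t x} y \<partial>\<mu>)"
      by (rule nn_integral_mono) (rule pt)
    also have "\<dots> = emeasure \<mu> {t x}" using borel by simp
    also have "\<dots> = 0" by (rule nonatomic)
    finally show "(\<integral>\<^sup>+ y. indicator N (x(i0 := y)) \<partial>\<mu>) \<le> 0" .
  qed
  finally have "emeasure M N = 0" by simp
  then have "N \<in> null_sets M" using Nmeas by auto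
  then have "AE g in M. \<not> Q g" by (rule AE_I') (auto simp: N_def)
  then show ?thesis unfolding M_def Q_def .
qed

lemma AE_pos:
  fixes \<mu> :: "real measure"
  assumes prob: "prob_space \<mu>" and positive: "AE x in \<mu>. x > 0"
  shows "AE g in PiM UNIV (\<lambda>_::'i::finite. \<mu>). \<forall>i. g i > 0"
proof -
  have "AE g in PiM UNIV (\<lambda>_::'i. \<mu>). \<forall>i\<in>UNIV. g i > 0"
    by (rule AE_finite_allI) (auto intro: AE_PiM_component[where P="\<lambda>x. x > 0"] prob positive)
  then show ?thesis by simp
qed




lemma kkt:
  fixes p :: "(real, 'k::finite \<times> 'a::finite) vec"
  assumes NE: "nash_equilibrium P b \<sigma>2 g p"
    and gpos: "\<And>i. g i > 0" and \<sigma>pos: "\<And>\<alpha>. \<sigma>2 \<alpha> > 0" and bpos: "\<And>\<alpha>. b \<alpha> > 0"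
    and pa: "p $ (k, \<alpha>) > 0" and ab: "\<alpha> \<noteq> \<beta>"
  shows "b \<beta> * g (k,\<beta>) / (\<sigma>2 \<beta> + (\<Sum>l\<in>UNIV. g (l,\<beta>) * p$(l,\<beta>)))
         \<le> b \<alpha> * g (k,\<alpha>) / (\<sigma>2 \<alpha> + (\<Sum>l\<in>UNIV. g (l,\<alpha>) * p$(l,\<alpha>)))"
proof (rule ccontr)
  assume contra: "\<not> ?thesis"
  have pP: "p \<in> profiles P" and NE2: "\<And>q'. q' \<in> strategy_set P k \<Longrightarrow> payoff b \<sigma>2 g k (deviate p k q') \<le> payoff b \<sigma>2 g k p"
    using NE unfolding nash_equilibrium_def by auto
  have pnn: "\<And>i. p$i \<ge> 0" using pP unfolding profiles_def by auto
  define W where "W \<gamma> = \<sigma>2 \<gamma> + (\<Sum>l\<in>UNIV. g (l,\<gamma>) * p$(l,\<gamma>))" for \<gamma>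
  define I where "I \<gamma> = \<sigma>2 \<gamma> + (\<Sum>l\<in>UNIV - {k}. g (l,\<gamma>) * p$(l,\<gamma>))" for \<gamma>
  define D where "D \<gamma> = b \<gamma> * g (k,\<gamma>) / W \<gamma>" for \<gamma>
  have Ipos: "I \<gamma> > 0" for \<gamma>
  proof -
    have "(\<Sum>l\<in>UNIV - {k}. g (l,\<gamma>) * p$(l,\<gamma>)) \<ge> 0"
      by (intro sum_nonneg mult_nonneg_nonneg) (auto intro: less_imp_le gpos pnn)
    then show ?thesis using \<sigma>pos[of \<gamma>] unfolding I_def by linarith
  qed
  have WI: "W \<gamma> = I \<gamma> + g (k,\<gamma>) * p$(k,\<gamma>)" for \<gamma>
    unfolding W_def I_def by (subst sum.remove[of _ k]) auto
  have gp: "g (k,\<gamma>) * p$(k,\<gamma>) \<ge> 0" for \<gamma> by (intro mult_nonneg_nonneg) (auto intro: less_imp_le gpos pnn)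
  define e where "e \<gamma> = (if \<gamma> = \<beta> then 1 else if \<gamma> = \<alpha> then -1 else 0 :: real)" for \<gamma>
  have sume: "(\<Sum>\<gamma>\<in>UNIV. e \<gamma> * c \<gamma>) = c \<beta> - c \<alpha>" for c
  proof -
    have "(\<Sum>\<gamma>\<in>UNIV. e \<gamma> * c \<gamma>) = (\<Sum>\<gamma>\<in>UNIV. (if \<gamma> = \<beta> then c \<beta> else 0) - (if \<gamma> = \<alpha> then c \<alpha> else 0))"
      by (rule sum.cong) (auto simp: e_def ab)
    also have "\<dots> = c \<beta> - c \<alpha>" by (simp add: sum_subtractf)
    finally show ?thesis .
  qed
  define q where "q t \<gamma> = p$(k,\<gamma>) + t * e \<gamma>" for t \<gamma>
  define f where "f t = (\<Sum>\<gamma>\<in>UNIV. b \<gamma> * ln (1 + g (k,\<gamma>) * q t \<gamma> / I \<gamma>))" for t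
  have fpay: "f t = payoff b \<sigma>2 g k (deviate p k (q t))" for t
    unfolding f_def payoff_def deviate_def I_def by (intro sum.cong) auto
  have dev0: "deviate p k (q 0) = p" unfolding deviate_def q_def by (auto simp: vec_eq_iff)
  have der: "((\<lambda>t. b \<gamma> * ln (1 + g (k,\<gamma>) * q t \<gamma> / I \<gamma>)) has_real_derivative e \<gamma> * D \<gamma>) (at 0)" for \<gamma>
  proof -
    have pos: "1 + g (k,\<gamma>) * p$(k,\<gamma>) / I \<gamma> > 0" using gp[of \<gamma>] Ipos[of \<gamma>] by (simp add: add_pos_nonneg)
    have "((\<lambda>t. b \<gamma> * ln (1 + g (k,\<gamma>) * (p$(k,\<gamma>) + t * e \<gamma>) / I \<gamma>)) has_real_derivative
            b \<gamma> * ((g (k,\<gamma>) * e \<gamma> / I \<gamma>) / (1 + g (k,\<gamma>) * (p$(k,\<gamma>) + 0 * e \<gamma>) / I \<gamma>))) (at 0)"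
      using pos Ipos[of \<gamma>] by (auto intro!: derivative_eq_intros simp: ac_simps)
    moreover have "b \<gamma> * ((g (k,\<gamma>) * e \<gamma> / I \<gamma>) / (1 + g (k,\<gamma>) * (p$(k,\<gamma>) + 0 * e \<gamma>) / I \<gamma>)) = e \<gamma> * D \<gamma>"
      unfolding D_def WI using Ipos[of \<gamma>] gp[of \<gamma>] by (simp add: field_simps)
    ultimately show ?thesis unfolding q_def by simp
  qed
  have "(f has_real_derivative (\<Sum>\<gamma>\<in>UNIV. e \<gamma> * D \<gamma>)) (at 0)"
    unfolding f_def by (rule DERIV_sum) (rule der)
  then have derf: "(f has_real_derivative D \<beta> - D \<alpha>) (at 0)" using sume by simp
  have "D \<beta> - D \<alpha> > 0" using contra unfolding D_def W_def by simp
  from DERIV_pos_inc_right[OF derf this] obtain d where d: "d > 0" "\<And>h. h > 0 \<Longrightarrow> h < d \<Longrightarrow> f 0 < f (0 + h)"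
    by blast
  define t where "t = min (d/2) (p$(k,\<alpha>))"
  have t: "t > 0" "t < d" "t \<le> p$(k,\<alpha>)" using d(1) pa unfolding t_def by auto
  have "f 0 < f t" using d(2)[OF t(1) t(2)] by simp
  moreover have "q t \<in> strategy_set P k"
  proof -
    have "q t \<gamma> \<ge> 0" for \<gamma> using t pnn[of "(k,\<gamma>)"] unfolding q_def e_def by auto
    moreover have "(\<Sum>\<gamma>\<in>UNIV. q t \<gamma>) = P k"
    proof -
      have "(\<Sum>\<gamma>\<in>UNIV. q t \<gamma>) = (\<Sum>\<gamma>\<in>UNIV. p$(k,\<gamma>)) + (\<Sum>\<gamma>\<in>UNIV. e \<gamma> * t)"
        unfolding q_def by (simp add: sum.distrib mult.commute)
      also have "(\<Sum>\<gamma>\<in>UNIV. e \<gamma> * t) = 0" using sume[of "\<lambda>_. t"] by simp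
      finally show ?thesis using pP unfolding profiles_def by auto
    qed
    ultimately show ?thesis unfolding strategy_set_def by auto
  qed
  then have "f t \<le> f 0" using NE2 unfolding fpay dev0 by auto
  ultimately show False by simp
qed




theorem corollary2:
  fixes P :: "'k::finite \<Rightarrow> real" and b \<sigma>2 :: "'a::finite \<Rightarrow> real"
    and \<mu> :: "real measure"
  assumes P_pos: "\<And>k. P k > 0"
    and b_pos: "\<And>\<alpha>. b \<alpha> > 0"
    and \<sigma>2_pos: "\<And>\<alpha>. \<sigma>2 \<alpha> > 0"
    and prob: "prob_space \<mu>"
    and borel: "sets \<mu> = sets borel"
    and positive: "AE x in \<mu>. x > 0"
    and nonatomic: "\<And>x. emeasure \<mu> {x} = 0"
  shows "AE g in (PiM UNIV (\<lambda>_::'k \<times> 'a. \<mu>)).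
           \<forall>p. nash_equilibrium P b \<sigma>2 g p \<longrightarrow>
             (\<exists>F. F face_of profiles P \<and> p \<in> rel_interior F \<and> aff_dim F \<le> int CARD('a) - 1)"
proof -
  define Big where "Big = {E::('k \<times> 'a) set. card E \<ge> CARD('a) + CARD('k)}"
  define Rep where "Rep E h \<longleftrightarrow> h \<noteq> 0 \<and> (\<forall>c. (\<exists>x y. \<forall>i\<in>E. c$i = x (snd i) + y (fst i)) \<longrightarrow> h \<bullet> c = 0)"
    for E :: "('k \<times> 'a) set" and h :: "(real, 'k \<times> 'a) vec"
  define hE where "hE E = (SOME h. Rep E h)" for E
  have hE: "Rep E (hE E)" if "E \<in> Big" for E
    unfolding hE_def by (rule someI_ex) (use lin_alg[of E] that in \<open>auto simp: Big_def Rep_def\<close>)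
  define \<beta> where "\<beta> i = ln (b (snd i))" for i :: "'k \<times> 'a"
  define Good where "Good g \<longleftrightarrow> (\<forall>i. g i > 0) \<and>
     (\<forall>E\<in>Big. \<not> ((\<forall>i. g i > 0) \<and> (\<Sum>i\<in>UNIV. hE E $ i * (\<beta> i + ln (g i))) = 0))"
    for g :: "'k \<times> 'a \<Rightarrow> real"
  have finBig: "finite Big" by (rule finite_subset[OF subset_UNIV]) simp
  have AEgood: "AE g in PiM UNIV (\<lambda>_::'k \<times> 'a. \<mu>). Good g"
    unfolding Good_def
  proof (intro AE_conjI AE_pos[OF prob positive] AE_finite_allI[OF finBig])
    fix E assume "E \<in> Big"
    then have "hE E \<noteq> 0" using hE unfolding Rep_def by blast
    then show "AE g in PiM UNIV (\<lambda>_::'k \<times> 'a. \<mu>).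
        \<not> ((\<forall>i. g i > 0) \<and> (\<Sum>i\<in>UNIV. hE E $ i * (\<beta> i + ln (g i))) = 0)"
      by (rule null_hyper[OF prob borel nonatomic])
  qed
  have key: "\<exists>F. F face_of profiles P \<and> p \<in> rel_interior F \<and> aff_dim F \<le> int CARD('a) - 1"
    if G: "Good g" and NE: "nash_equilibrium P b \<sigma>2 g p" for g p
  proof -
    have gpos: "\<And>i. g i > 0" using G unfolding Good_def by auto
    have pP: "p \<in> profiles P" using NE unfolding nash_equilibrium_def by auto
    have pnn: "\<And>i. p$i \<ge> 0" using pP unfolding profiles_def by auto
    define E where "E = {i. p$i > 0}"
    define W where "W \<gamma> = \<sigma>2 \<gamma> + (\<Sum>l\<in>UNIV. g (l,\<gamma>) * p$(l,\<gamma>))" for \<gamma>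
    define D where "D k \<gamma> = b \<gamma> * g (k,\<gamma>) / W \<gamma>" for k \<gamma>
    have Wpos: "W \<gamma> > 0" for \<gamma>
    proof -
      have "(\<Sum>l\<in>UNIV. g (l,\<gamma>) * p$(l,\<gamma>)) \<ge> 0"
        by (intro sum_nonneg mult_nonneg_nonneg) (auto intro: less_imp_le gpos pnn)
      then show ?thesis using \<sigma>2_pos[of \<gamma>] unfolding W_def by linarith
    qed
    have Dpos: "D k \<gamma> > 0" for k \<gamma> unfolding D_def using Wpos gpos b_pos by simp
    have Deq: "D k \<alpha> = D k \<alpha>'" if "p$(k,\<alpha>) > 0" "p$(k,\<alpha>') > 0" for k \<alpha> \<alpha>'
    proof (cases "\<alpha> = \<alpha>'")
      case False
      show ?thesis using kkt[OF NE gpos \<sigma>2_pos b_pos that(1) False] kkt[OF NE gpos \<sigma>2_pos b_pos that(2)] False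
        unfolding D_def W_def by fastforce
    qed simp
    define ak where "ak k = (SOME \<alpha>. p $ (k, \<alpha>) > 0)" for k
    have ak: "p $ (k, ak k) > 0" for k unfolding ak_def by (rule someI_ex) (rule row_pos[OF pP P_pos])
    have cardE: "card E < CARD('a) + CARD('k)"
    proof (rule ccontr)
      assume "\<not> ?thesis"
      then have EB: "E \<in> Big" unfolding Big_def by simp
      define c :: "(real, 'k \<times> 'a) vec" where "c = (\<chi> i. \<beta> i + ln (g i))"
      have "\<exists>x y. \<forall>i\<in>E. c$i = x (snd i) + y (fst i)"
      proof (intro exI[of _ "\<lambda>\<alpha>. ln (W \<alpha>)"] exI[of _ "\<lambda>k. ln (D k (ak k))"] ballI)
        fix i assume iE: "i \<in> E"
        obtain k \<alpha> where i: "i = (k,\<alpha>)" by fastforce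
        have "D k (ak k) = D k \<alpha>" using Deq[OF ak] iE i unfolding E_def by auto
        moreover have "ln (D k \<alpha>) + ln (W \<alpha>) = ln (b \<alpha>) + ln (g (k,\<alpha>))"
          using Wpos[of \<alpha>] gpos[of "(k,\<alpha>)"] b_pos[of \<alpha>] unfolding D_def
          by (simp add: ln_mult ln_div)
        ultimately show "c$i = (\<lambda>\<alpha>. ln (W \<alpha>)) (snd i) + (\<lambda>k. ln (D k (ak k))) (fst i)"
          unfolding c_def i \<beta>_def by simp
      qed
      then have "hE E \<bullet> c = 0" using hE[OF EB] unfolding Rep_def by auto
      then have "(\<Sum>i\<in>UNIV. hE E $ i * (\<beta> i + ln (g i))) = 0" unfolding c_def inner_vec_def by simp
      then show False using G EB gpos unfolding Good_def by blast
    qed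
    obtain F where F: "F face_of profiles P" "p \<in> rel_interior F"
      "aff_dim F \<le> int (card {i. p$i > 0}) - int CARD('k)"
      using face_lemma[OF pP P_pos] by blast
    have "aff_dim F \<le> int CARD('a) - 1" using F(3) cardE unfolding E_def by linarith
    then show ?thesis using F by blast
  qed
  show ?thesis using AEgood by (rule eventually_mono) (use key in blast)
qed


end
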